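(* Let $H\in C^\infty(\mathbb{R}^2)$ satisfy (H1') and (H2), let $U\subset\mathbb{R}^2$ be a domain, $\epsilon\in(0,1]$, and let $u^\epsilon\in C^\infty(U)$ solve $\mathscr A_H[u^\epsilon]+\epsilon\operatorname{div}[D_pH(Du^\epsilon)]=0$ in $U$. Then $[H(Du^\epsilon)]^{1/2}$ is locally Lipschitz in $U$, and at every $x\in U$ at which $[H(Du^\epsilon)]^{1/2}$ is differentiable, $$[-\det D^2u^\epsilon][\det D^2_{pp}H(Du^\epsilon)]=4\tilde\tau_H(Du^\epsilon)\langle D^2_{pp}H(Du^\epsilon)D[H(Du^\epsilon)]^{1/2},D[H(Du^\epsilon)]^{1/2}\rangle+\tilde\tau_H(Du^\epsilon)\frac{\epsilon(\operatorname{div}[D_pH(Du^\epsilon)])^2}{H(Du^\epsilon)}.$$ In particular $-\det D^2u^\epsilon\ge0$ in $U$.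
   Context: (H2): $H(0)=\min_{p}H(p)=0$. For $R\ge0$, $\lambda_H(R):=\sup_{\epsilon>0}\sup\{\lambda>0: H-\frac\lambda2|p|^2\text{ convex on }H^{-1}([0,R+\epsilon))\}$, $\Lambda_H(R):=\inf_{\epsilon>0}\inf\{\Lambda>0:\frac\Lambda2|p|^2-H\text{ convex on }H^{-1}([0,R+\epsilon))\}$; $\lambda_H(\infty)=\lim_{R\to\infty}\lambda_H(R)$, $\Lambda_H(\infty)=\lim_{R\to\infty}\Lambda_H(R)$. (H1'): $0<\lambda_H(\infty)\le\Lambda_H(\infty)<\infty$ (i.e. $H$ is strongly convex and strongly concave on $\mathbb{R}^2$). $\mathscr A_H[v]:=\sum_{i,j}H_{p_i}(Dv)H_{p_j}(Dv)v_{x_ix_j}$. $\tilde\tau_H(0)=\frac12$ and $\tilde\tau_H(p)=H(p)/\langle[D^2_{pp}H(p)]^{-1}D_pH(p),D_pH(p)\rangle$ for $p\ne0$. Convention: at points where $D_pH(Du^\epsilon)=0$ (equivalently $Du^\epsilon=0$) the quotient $(\operatorname{div}[D_pH(Du^\epsilon)])^2/H(Du^\epsilon)$ is taken to be $0$. *)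

theory Defs
  imports "HOL-Analysis.Analysis"
begin

definition partial :: "(real^2 \<Rightarrow> real) \<Rightarrow> 2 \<Rightarrow> real^2 \<Rightarrow> real" where
  "partial f i x = frechet_derivative f (at x) (axis i 1)"

definition grad :: "(real^2 \<Rightarrow> real) \<Rightarrow> real^2 \<Rightarrow> real^2" where
  "grad f x = (\<chi> i. partial f i x)"

definition hess :: "(real^2 \<Rightarrow> real) \<Rightarrow> real^2 \<Rightarrow> real^2^2" where
  "hess f x = (\<chi> i j. partial (partial f j) i x)"

fun Ck :: "nat \<Rightarrow> (real^2) set \<Rightarrow> (real^2 \<Rightarrow> real) \<Rightarrow> bool" where
  "Ck 0 U f = continuous_on U f"
| "Ck (Suc k) U f = (f differentiable_on U \<and> continuous_on U f \<and> (\<forall>i. Ck k U (partial f i)))"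

definition smooth_on :: "(real^2) set \<Rightarrow> (real^2 \<Rightarrow> real) \<Rightarrow> bool" where
  "smooth_on U f = (\<forall>k. Ck k U f)"

definition lambdaH :: "(real^2 \<Rightarrow> real) \<Rightarrow> real \<Rightarrow> ereal" where
  "lambdaH H R = (SUP e\<in>{e. e > 0}. Sup {ereal l | l. l > 0 \<and>
      convex_on {p. 0 \<le> H p \<and> H p < R + e} (\<lambda>p. H p - l / 2 * (norm p)\<^sup>2)})"

definition LambdaH :: "(real^2 \<Rightarrow> real) \<Rightarrow> real \<Rightarrow> ereal" where
  "LambdaH H R = (INF e\<in>{e. e > 0}. Inf {ereal L | L. L > 0 \<and>
      convex_on {p. 0 \<le> H p \<and> H p < R + e} (\<lambda>p. L / 2 * (norm p)\<^sup>2 - H p)})"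

definition H1' :: "(real^2 \<Rightarrow> real) \<Rightarrow> bool" where
  "H1' H = (\<exists>l L. ((\<lambda>R. lambdaH H R) \<longlongrightarrow> l) at_top \<and>
                  ((\<lambda>R. LambdaH H R) \<longlongrightarrow> L) at_top \<and>
                  0 < l \<and> l \<le> L \<and> L < \<infinity>)"

definition H2 :: "(real^2 \<Rightarrow> real) \<Rightarrow> bool" where
  "H2 H = (H 0 = 0 \<and> (\<forall>p. H 0 \<le> H p))"

definition AH :: "(real^2 \<Rightarrow> real) \<Rightarrow> (real^2 \<Rightarrow> real) \<Rightarrow> real^2 \<Rightarrow> real" where
  "AH H v x = (\<Sum>i\<in>UNIV. \<Sum>j\<in>UNIV.
      grad H (grad v x) $ i * grad H (grad v x) $ j * hess v x $ i $ j)"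

definition divDH :: "(real^2 \<Rightarrow> real) \<Rightarrow> (real^2 \<Rightarrow> real) \<Rightarrow> real^2 \<Rightarrow> real" where
  "divDH H v x = (\<Sum>i\<in>UNIV. partial (\<lambda>y. grad H (grad v y) $ i) i x)"

definition tauH :: "(real^2 \<Rightarrow> real) \<Rightarrow> real^2 \<Rightarrow> real" where
  "tauH H p = (if p = 0 then 1/2
     else H p / ((matrix_inv (hess H p) *v grad H p) \<bullet> grad H p))"

definition locally_lipschitz_on :: "(real^2) set \<Rightarrow> (real^2 \<Rightarrow> real) \<Rightarrow> bool" where
  "locally_lipschitz_on U g =
     (\<forall>x\<in>U. \<exists>r>0. \<exists>C. cball x r \<subseteq> U \<and> C-lipschitz_on (cball x r) g)"

end

theory Submission
  imports Defs
begin


lemma smooth_Ck: "smooth_on U f \<Longrightarrow> Ck k U f" by (simp add: smooth_on_def)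

lemma smooth_partial: "smooth_on U f \<Longrightarrow> smooth_on U (partial f i)"
  unfolding smooth_on_def by (metis Ck.simps(2))

lemma smooth_cont: "smooth_on U f \<Longrightarrow> continuous_on U f"
  using smooth_Ck[of U f 0] by simp

lemma smooth_diff: "smooth_on U f \<Longrightarrow> open U \<Longrightarrow> x \<in> U \<Longrightarrow> f differentiable (at x)"
  using smooth_Ck[of U f 1] differentiable_on_eq_differentiable_at by auto

lemma vec2_expand: "(h::real^2) = h$1 *\<^sub>R axis 1 1 + h$2 *\<^sub>R axis 2 1"
  by (simp add: vec_eq_iff forall_2 axis_def)

lemma inner2: "(a::real^2) \<bullet> b = a$1 * b$1 + a$2 * b$2"
  by (simp add: inner_vec_def sum_2)

lemma frechet_grad:
  assumes "f differentiable (at x)"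
  shows "(f has_derivative (\<lambda>h. grad f x \<bullet> h)) (at x)"
proof -
  let ?F = "frechet_derivative f (at x)"
  have d: "(f has_derivative ?F) (at x)" using assms frechet_derivative_works by blast
  have lin: "linear ?F" using d has_derivative_linear by blast
  have "?F h = grad f x \<bullet> h" for h
  proof -
    have "?F h = ?F (h$1 *\<^sub>R axis 1 1 + h$2 *\<^sub>R axis 2 1)" using vec2_expand[of h] by simp
    also have "\<dots> = h$1 * ?F (axis 1 1) + h$2 * ?F (axis 2 1)"
      using lin by (simp add: linear_add linear_scale)
    finally show ?thesis by (simp add: inner2 grad_def partial_def)
  qed
  then have "?F = (\<lambda>h. grad f x \<bullet> h)" by (rule ext)
  then show ?thesis using d by metis
qed

lemma dd1:
  assumes "f differentiable (at (x + s *\<^sub>R axis 1 1 + b *\<^sub>R axis 2 1))"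
  shows "((\<lambda>s. f (x + s *\<^sub>R axis 1 1 + b *\<^sub>R axis 2 1)) has_real_derivative
     partial f 1 (x + s *\<^sub>R axis 1 1 + b *\<^sub>R axis 2 1)) (at s)"
proof -
  have "((\<lambda>s. x + s *\<^sub>R axis 1 1 + b *\<^sub>R axis 2 1) has_derivative (\<lambda>s. s *\<^sub>R axis 1 1)) (at s)"
    by (auto intro!: derivative_eq_intros)
  from has_derivative_compose[OF this frechet_grad[OF assms]]
  show ?thesis unfolding has_field_derivative_def
    by (rule has_derivative_eq_rhs) (auto simp: inner2 axis_def grad_def fun_eq_iff)
qed

lemma dd2:
  assumes "f differentiable (at (x + a *\<^sub>R axis 1 1 + t *\<^sub>R axis 2 1))"
  shows "((\<lambda>t. f (x + a *\<^sub>R axis 1 1 + t *\<^sub>R axis 2 1)) has_real_derivative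
     partial f 2 (x + a *\<^sub>R axis 1 1 + t *\<^sub>R axis 2 1)) (at t)"
proof -
  have "((\<lambda>t. x + a *\<^sub>R axis 1 1 + t *\<^sub>R axis 2 1) has_derivative (\<lambda>t. t *\<^sub>R axis 2 1)) (at t)"
    by (auto intro!: derivative_eq_intros)
  from has_derivative_compose[OF this frechet_grad[OF assms]]
  show ?thesis unfolding has_field_derivative_def
    by (rule has_derivative_eq_rhs) (auto simp: inner2 axis_def grad_def fun_eq_iff)
qed

lemma norm2_le: "norm (a *\<^sub>R axis 1 (1::real) + b *\<^sub>R axis 2 (1::real) :: real^2) \<le> \<bar>a\<bar> + \<bar>b\<bar>"
proof -
  have "norm (a *\<^sub>R axis 1 (1::real) + b *\<^sub>R axis 2 (1::real) :: real^2)
      \<le> norm (a *\<^sub>R axis 1 (1::real) :: real^2) + norm (b *\<^sub>R axis 2 (1::real) :: real^2)"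
    by (rule norm_triangle_ineq)
  then show ?thesis by (simp add: norm_axis_1)
qed

lemma schwarz:
  assumes sm: "smooth_on U f" and U: "open U" and x: "x \<in> U"
  shows "hess f x $ 1 $ 2 = hess f x $ 2 $ 1"
proof -
  define P where "P = (\<lambda>a b. x + a *\<^sub>R axis 1 (1::real) + b *\<^sub>R axis 2 (1::real))"
  define g1 where "g1 = partial (partial f 1) 2"
  define g2 where "g2 = partial (partial f 2) 1"
  have h: "hess f x $ 1 $ 2 = g2 x" "hess f x $ 2 $ 1 = g1 x" by (simp_all add: hess_def g1_def g2_def)
  obtain r where r: "r > 0" "ball x r \<subseteq> U" using U x open_contains_ball by blast
  have dP: "dist x (P a b) \<le> \<bar>a\<bar> + \<bar>b\<bar>" for a b
  proof -
    have "dist x (P a b) = norm (a *\<^sub>R axis 1 (1::real) + b *\<^sub>R axis 2 (1::real) :: real^2)"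
      unfolding P_def dist_norm by (metis add.assoc add_diff_cancel_left' norm_minus_commute)
    then show ?thesis using norm2_le by simp
  qed
  have Pin: "P a b \<in> U" if "\<bar>a\<bar> + \<bar>b\<bar> < r" for a b
    using dP[of a b] that r by auto
  have sm1: "smooth_on U (partial f i)" for i using sm smooth_partial by blast
  have key: "\<exists>z1 z2. dist x z1 \<le> 2*\<delta> \<and> dist x z2 \<le> 2*\<delta> \<and> g1 z1 = g2 z2" if d: "0<\<delta>" "2*\<delta> < r" for \<delta>
  proof -
    have d1: "DERIV (\<lambda>s. f (P s \<delta>) - f (P s 0)) s :> (partial f 1 (P s \<delta>) - partial f 1 (P s 0))"
      if "0 \<le> s" "s \<le> \<delta>" for s
    proof -
      have "P s \<delta> \<in> U" "P s 0 \<in> U" using that d by (auto intro!: Pin)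
      then show ?thesis unfolding P_def
        by (intro DERIV_diff dd1 smooth_diff[OF sm U]) (auto simp: P_def)
    qed
    obtain \<sigma> where s: "0 < \<sigma>" "\<sigma> < \<delta>"
      "(f (P \<delta> \<delta>) - f (P \<delta> 0)) - (f (P 0 \<delta>) - f (P 0 0)) = (\<delta> - 0) * (partial f 1 (P \<sigma> \<delta>) - partial f 1 (P \<sigma> 0))"
      using MVT2[OF d(1) d1] by blast
    have d2: "DERIV (\<lambda>t. partial f 1 (P \<sigma> t)) t :> g1 (P \<sigma> t)"
      if "0 \<le> t" "t \<le> \<delta>" for t
    proof -
      have "P \<sigma> t \<in> U" using that d s by (auto intro!: Pin)
      then show ?thesis unfolding P_def g1_def
        by (intro dd2 smooth_diff[OF sm1 U]) (auto simp: P_def)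
    qed
    obtain \<tau> where t: "0 < \<tau>" "\<tau> < \<delta>"
      "partial f 1 (P \<sigma> \<delta>) - partial f 1 (P \<sigma> 0) = (\<delta> - 0) * g1 (P \<sigma> \<tau>)"
      using MVT2[OF d(1) d2] by blast
    have d3: "DERIV (\<lambda>t. f (P \<delta> t) - f (P 0 t)) t :> (partial f 2 (P \<delta> t) - partial f 2 (P 0 t))"
      if "0 \<le> t" "t \<le> \<delta>" for t
    proof -
      have "P \<delta> t \<in> U" "P 0 t \<in> U" using that d by (auto intro!: Pin)
      then show ?thesis unfolding P_def
        by (intro DERIV_diff dd2 smooth_diff[OF sm U]) (auto simp: P_def)
    qed
    obtain \<sigma>' where s': "0 < \<sigma>'" "\<sigma>' < \<delta>"
      "(f (P \<delta> \<delta>) - f (P 0 \<delta>)) - (f (P \<delta> 0) - f (P 0 0)) = (\<delta> - 0) * (partial f 2 (P \<delta> \<sigma>') - partial f 2 (P 0 \<sigma>'))"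
      using MVT2[OF d(1) d3] by blast
    have d4: "DERIV (\<lambda>s. partial f 2 (P s \<sigma>')) s :> g2 (P s \<sigma>')"
      if "0 \<le> s" "s \<le> \<delta>" for s
    proof -
      have "P s \<sigma>' \<in> U" using that d s' by (auto intro!: Pin)
      then show ?thesis unfolding P_def g2_def
        by (intro dd1 smooth_diff[OF sm1 U]) (auto simp: P_def)
    qed
    obtain \<tau>' where t': "0 < \<tau>'" "\<tau>' < \<delta>"
      "partial f 2 (P \<delta> \<sigma>') - partial f 2 (P 0 \<sigma>') = (\<delta> - 0) * g2 (P \<tau>' \<sigma>')"
      using MVT2[OF d(1) d4] by blast
    have "\<delta> * (\<delta> * g1 (P \<sigma> \<tau>)) = \<delta> * (\<delta> * g2 (P \<tau>' \<sigma>'))"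
      using s(3) t(3) s'(3) t'(3) by (simp add: algebra_simps)
    then have "g1 (P \<sigma> \<tau>) = g2 (P \<tau>' \<sigma>')" using d by simp
    moreover have "dist x (P \<sigma> \<tau>) \<le> 2*\<delta>" using dP[of \<sigma> \<tau>] s t by simp
    moreover have "dist x (P \<tau>' \<sigma>') \<le> 2*\<delta>" using dP[of \<tau>' \<sigma>'] s' t' by simp
    ultimately show ?thesis by blast
  qed
  have c1: "continuous_on U g1" "continuous_on U g2"
    unfolding g1_def g2_def using smooth_cont smooth_partial sm by blast+
  show ?thesis
  proof (rule ccontr)
    assume ne: "hess f x $ 1 $ 2 \<noteq> hess f x $ 2 $ 1"
    define e where "e = \<bar>g1 x - g2 x\<bar> / 2"
    have e: "e > 0" using ne h e_def by simp
    obtain d1 where d1: "d1 > 0" "\<forall>y\<in>U. dist y x < d1 \<longrightarrow> dist (g1 y) (g1 x) < e"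
      using c1(1) x e unfolding continuous_on_iff by blast
    obtain d2 where d2: "d2 > 0" "\<forall>y\<in>U. dist y x < d2 \<longrightarrow> dist (g2 y) (g2 x) < e"
      using c1(2) x e unfolding continuous_on_iff by blast
    define \<delta> where "\<delta> = min (min d1 d2) r / 3"
    have "0 < \<delta>" "2*\<delta> < r" using d1 d2 r by (auto simp: \<delta>_def)
    then obtain z1 z2 where z: "dist x z1 \<le> 2*\<delta>" "dist x z2 \<le> 2*\<delta>" "g1 z1 = g2 z2"
      using key by blast
    have "z1 \<in> U" "z2 \<in> U" using z r \<open>2*\<delta> < r\<close> by (auto simp: subset_iff)
    moreover have "dist z1 x < d1" "dist z2 x < d2" using z d1 d2 \<open>0 < \<delta>\<close>
      by (auto simp: \<delta>_def dist_commute)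
    ultimately have "dist (g1 z1) (g1 x) < e" "dist (g2 z2) (g2 x) < e" using d1 d2 by auto
    then show False using z(3) e_def unfolding dist_real_def by (simp add: abs_if split: if_splits)
  qed
qed

lemma grad_nth: "grad f x $ i = partial f i x" by (simp add: grad_def)

lemma partial_of_deriv: "(f has_derivative L) (at x) \<Longrightarrow> partial f i x = L (axis i 1)"
  unfolding partial_def using frechet_derivative_at by metis

lemma inner_axis2: "(a::real^2) \<bullet> axis i 1 = a $ i"
  using exhaust_2[of i] by (auto simp: inner2 axis_def)

lemma grad_vec_deriv:
  assumes sm: "smooth_on U u" and U: "open U" and x: "x \<in> U"
  shows "((\<lambda>y. grad u y) has_derivative (\<lambda>h. \<chi> k. grad (partial u k) x \<bullet> h)) (at x)"
proof -
  have e: "(\<lambda>y. grad u y) = (\<lambda>y. partial u 1 y *\<^sub>R axis 1 1 + partial u 2 y *\<^sub>R axis 2 1)"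
    by (rule ext) (simp add: vec_eq_iff forall_2 axis_def grad_def)
  have d: "\<And>k. (partial u k has_derivative (\<lambda>h. grad (partial u k) x \<bullet> h)) (at x)"
    by (rule frechet_grad, rule smooth_diff[OF smooth_partial[OF sm] U x])
  have "((\<lambda>y. partial u 1 y *\<^sub>R axis (1::2) (1::real) + partial u 2 y *\<^sub>R axis (2::2) 1) has_derivative
     (\<lambda>h. (grad (partial u 1) x \<bullet> h) *\<^sub>R axis 1 1 + (grad (partial u 2) x \<bullet> h) *\<^sub>R axis 2 1)) (at x)"
    by (intro has_derivative_add has_derivative_scaleR_left d)
  moreover have "(\<lambda>h. (grad (partial u 1) x \<bullet> h) *\<^sub>R axis (1::2) (1::real) + (grad (partial u 2) x \<bullet> h) *\<^sub>R axis (2::2) 1)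
      = (\<lambda>h. \<chi> k. grad (partial u k) x \<bullet> h :: real^2)"
    by (rule ext) (simp add: vec_eq_iff forall_2 axis_def)
  ultimately show ?thesis using e by simp
qed

lemma comp_deriv:
  assumes sm: "smooth_on U u" and U: "open U" and x: "x \<in> U"
    and F: "F differentiable (at (grad u x))"
  shows "((\<lambda>y. F (grad u y)) has_derivative
     (\<lambda>h. \<Sum>k\<in>UNIV. partial F k (grad u x) * (grad (partial u k) x \<bullet> h))) (at x)"
proof -
  from has_derivative_compose[OF grad_vec_deriv[OF sm U x] frechet_grad[OF F]]
  show ?thesis by (simp add: inner_vec_def grad_def)
qed

lemma comp_partial:
  assumes sm: "smooth_on U u" and U: "open U" and x: "x \<in> U"
    and F: "F differentiable (at (grad u x))"
  shows "partial (\<lambda>y. F (grad u y)) i x = (\<Sum>k\<in>UNIV. partial F k (grad u x) * hess u x $ i $ k)"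
  using partial_of_deriv[OF comp_deriv[OF assms]]
  by (simp add: inner_axis2 hess_def grad_nth)

lemma sqrt_partial:
  assumes sm: "smooth_on U u" and U: "open U" and x: "x \<in> U"
    and F: "F differentiable (at (grad u x))" and pos: "F (grad u x) > 0"
  shows "partial (\<lambda>y. sqrt (F (grad u y))) i x =
     (\<Sum>k\<in>UNIV. partial F k (grad u x) * hess u x $ i $ k) / (2 * sqrt (F (grad u x)))"
proof -
  have "((\<lambda>y. sqrt (F (grad u y))) has_derivative
     (\<lambda>h. (\<Sum>k\<in>UNIV. partial F k (grad u x) * (grad (partial u k) x \<bullet> h)) * (inverse (sqrt (F (grad u x))) / 2))) (at x)"
    using has_derivative_real_sqrt[OF pos comp_deriv[OF assms(1-4)]] by simp
  from partial_of_deriv[OF this] show ?thesis using pos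
    by (simp add: inner_axis2 hess_def grad_nth field_simps)
qed

lemma deriv_upper:
  fixes \<phi> :: "real \<Rightarrow> real"
  assumes d: "DERIV \<phi> 0 :> D" and b: "b > 0" and le: "\<And>t. 0 < t \<Longrightarrow> t < b \<Longrightarrow> (\<phi> t - \<phi> 0) / t \<le> c"
  shows "D \<le> c"
proof -
  have "((\<lambda>t. (\<phi> t - \<phi> 0) / (t - 0)) \<longlongrightarrow> D) (at_right 0)"
    using has_field_derivative_iff has_field_derivative_at_within[OF d] by blast
  then have "((\<lambda>t. (\<phi> t - \<phi> 0) / t) \<longlongrightarrow> D) (at_right 0)" by simp
  moreover have "eventually (\<lambda>t. (\<phi> t - \<phi> 0) / t \<le> c) (at_right 0)"
    unfolding eventually_at_right_field using b le by blast
  ultimately show ?thesis using tendsto_upperbound trivial_limit_at_right_real by blast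
qed

lemma deriv_lower:
  fixes \<phi> :: "real \<Rightarrow> real"
  assumes d: "DERIV \<phi> 0 :> D" and b: "b > 0" and le: "\<And>t. 0 < t \<Longrightarrow> t < b \<Longrightarrow> c \<le> (\<phi> t - \<phi> 0) / t"
  shows "c \<le> D"
proof -
  have "((\<lambda>t. (\<phi> t - \<phi> 0) / (t - 0)) \<longlongrightarrow> D) (at_right 0)"
    using has_field_derivative_iff has_field_derivative_at_within[OF d] by blast
  then have "((\<lambda>t. (\<phi> t - \<phi> 0) / t) \<longlongrightarrow> D) (at_right 0)" by simp
  moreover have "eventually (\<lambda>t. c \<le> (\<phi> t - \<phi> 0) / t) (at_right 0)"
    unfolding eventually_at_right_field using b le by blast
  ultimately show ?thesis using tendsto_lowerbound trivial_limit_at_right_real by blast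
qed

lemma ddir:
  assumes "f differentiable (at (p + t *\<^sub>R w))"
  shows "((\<lambda>t. f (p + t *\<^sub>R w)) has_real_derivative (grad f (p + t *\<^sub>R w) \<bullet> w)) (at t)"
proof -
  have "((\<lambda>t. p + t *\<^sub>R w) has_derivative (\<lambda>t. t *\<^sub>R w)) (at t)"
    by (auto intro!: derivative_eq_intros)
  from has_derivative_compose[OF this frechet_grad[OF assms]]
  show ?thesis unfolding has_field_derivative_def
    by (rule has_derivative_eq_rhs) (auto simp: fun_eq_iff)
qed

lemma tangent:
  fixes g :: "real^2 \<Rightarrow> real"
  assumes cv: "convex_on S g" and S: "open S" and p: "p \<in> S" and q: "q \<in> S"
    and d: "(g has_derivative g') (at p)"
  shows "g p + g' (q - p) \<le> g q"
proof -
  define \<phi> where "\<phi> = (\<lambda>t. g (p + t *\<^sub>R (q - p)))"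
  have d0: "((\<lambda>t::real. p + t *\<^sub>R (q - p)) has_derivative (\<lambda>t. t *\<^sub>R (q - p))) (at 0)"
    by (auto intro!: derivative_eq_intros)
  have d': "(g has_derivative g') (at (p + 0 *\<^sub>R (q - p)))" using d by simp
  have lin: "linear g'" using d has_derivative_linear by blast
  have "(\<phi> has_derivative (\<lambda>t. g' (t *\<^sub>R (q - p)))) (at 0)"
    unfolding \<phi>_def by (rule has_derivative_compose[OF d0 d'])
  then have D: "DERIV \<phi> 0 :> g' (q - p)"
    unfolding has_field_derivative_def
    by (rule has_derivative_eq_rhs) (auto simp: fun_eq_iff linear_scale[OF lin])
  have "g' (q - p) \<le> g q - g p"
  proof (rule deriv_upper[OF D zero_less_one])
    fix t :: real assume t: "0 < t" "t < 1"
    have "p + t *\<^sub>R (q - p) = (1 - t) *\<^sub>R p + t *\<^sub>R q" by (simp add: algebra_simps)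
    then have "\<phi> t \<le> (1 - t) * g p + t * g q"
      using cv p q t unfolding convex_on_def \<phi>_def by auto
    then have "\<phi> t - \<phi> 0 \<le> t * (g q - g p)" by (simp add: \<phi>_def algebra_simps)
    then show "(\<phi> t - \<phi> 0) / t \<le> g q - g p" using t by (simp add: divide_simps mult.commute)
  qed
  then show ?thesis by simp
qed

lemma gfun_deriv:
  assumes "H differentiable (at p)"
  shows "((\<lambda>z. H z - l / 2 * (norm z)\<^sup>2) has_derivative (\<lambda>h. grad H p \<bullet> h - l * (p \<bullet> h))) (at p)"
proof -
  have e: "(\<lambda>z. H z - l / 2 * (norm z)\<^sup>2) = (\<lambda>z. H z - l / 2 * (z \<bullet> z))"
    by (simp add: power2_norm_eq_inner)
  have dn: "((\<lambda>z. z \<bullet> z) has_derivative (\<lambda>h. p \<bullet> h + h \<bullet> p)) (at p)"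
    by (rule has_derivative_inner[OF has_derivative_ident has_derivative_ident])
  have "((\<lambda>z. H z - l / 2 * (z \<bullet> z)) has_derivative (\<lambda>h. grad H p \<bullet> h - l / 2 * (p \<bullet> h + h \<bullet> p))) (at p)"
    by (rule has_derivative_diff[OF frechet_grad[OF assms] has_derivative_mult_right[OF dn]])
  then show ?thesis unfolding e
    by (rule has_derivative_eq_rhs) (auto simp: fun_eq_iff inner_commute algebra_simps)
qed

lemma tangentH:
  assumes cv: "convex_on S (\<lambda>z. H z - l / 2 * (norm z)\<^sup>2)" and S: "open S" and p: "p \<in> S" and q: "q \<in> S"
    and d: "H differentiable (at p)"
  shows "H p - l / 2 * (norm p)\<^sup>2 + (grad H p \<bullet> (q - p) - l * (p \<bullet> (q - p))) \<le> H q - l / 2 * (norm q)\<^sup>2"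
  using tangent[OF cv S p q gfun_deriv[OF d]] by simp

lemma conv_get:
  assumes "H1' H"
  shows "\<exists>l>0. \<exists>R'>R0. convex_on {p. 0 \<le> H p \<and> H p < R'} (\<lambda>p. H p - l / 2 * (norm p)\<^sup>2)"
proof -
  obtain l L where lim: "((\<lambda>R. lambdaH H R) \<longlongrightarrow> l) at_top" and l: "0 < l"
    using assms unfolding H1'_def by blast
  have "eventually (\<lambda>R. 0 < lambdaH H R) at_top" using order_tendstoD(1)[OF lim l] .
  then obtain N where N: "\<forall>R\<ge>N. 0 < lambdaH H R" by (auto simp: eventually_at_top_linorder)
  define R where "R = max N (R0 + 1)"
  have "0 < lambdaH H R" using N R_def by auto
  then obtain e where e: "e > 0" "0 < Sup {ereal l | l. l > 0 \<and> convex_on {p. 0 \<le> H p \<and> H p < R + e} (\<lambda>p. H p - l / 2 * (norm p)\<^sup>2)}"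
    unfolding lambdaH_def less_SUP_iff by auto
  then obtain l' where "l' > 0" "convex_on {p. 0 \<le> H p \<and> H p < R + e} (\<lambda>p. H p - l' / 2 * (norm p)\<^sup>2)"
    unfolding less_Sup_iff by auto
  moreover have "R + e > R0" using e R_def by auto
  ultimately show ?thesis by blast
qed

lemma gradH0:
  assumes sm: "smooth_on UNIV H" and h2: "H2 H"
  shows "partial H i 0 = 0"
proof -
  have d: "(H has_derivative (\<lambda>h. grad H 0 \<bullet> h)) (at 0)"
    by (rule frechet_grad, rule smooth_diff[OF sm]) auto
  have "eventually (\<lambda>y. H 0 \<le> H y) (at 0)" using h2 unfolding H2_def by auto
  from has_derivative_local_min[OF d this] have "(\<lambda>h. grad H 0 \<bullet> h) = (\<lambda>h. 0)" .
  then have "grad H 0 \<bullet> axis i 1 = 0" by metis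
  then show ?thesis by (simp add: inner_axis2 grad_nth)
qed

lemma hess_lower:
  assumes sm: "smooth_on UNIV H" and cv: "convex_on S (\<lambda>z. H z - l / 2 * (norm z)\<^sup>2)"
    and S: "open S" and p: "p \<in> S"
  shows "l * (a\<^sup>2 + b\<^sup>2) \<le> hess H p $1$1 * a\<^sup>2 + (hess H p $1$2 + hess H p $2$1) * a * b + hess H p $2$2 * b\<^sup>2"
proof -
  define w :: "real^2" where "w = a *\<^sub>R axis 1 1 + b *\<^sub>R axis 2 1"
  have w1: "w $ 1 = a" and w2: "w $ 2 = b" by (simp_all add: w_def axis_def)
  have ww: "w \<bullet> w = a\<^sup>2 + b\<^sup>2" by (simp add: inner2 w1 w2 power2_eq_square)
  have dH: "\<And>z. H differentiable (at z)" using smooth_diff[OF sm] by auto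
  have dH1: "\<And>z i. partial H i differentiable (at z)" using smooth_diff[OF smooth_partial[OF sm]] by auto
  define \<psi> where "\<psi> = (\<lambda>t. partial H 1 (p + t *\<^sub>R w) * a + partial H 2 (p + t *\<^sub>R w) * b)"
  have \<psi>i: "\<psi> t = grad H (p + t *\<^sub>R w) \<bullet> w" for t by (simp add: \<psi>_def inner2 grad_nth w1 w2)
  have dd: "DERIV (\<lambda>t. partial H i (p + t *\<^sub>R w)) 0 :> (hess H p $1$i * a + hess H p $2$i * b)" for i
    using ddir[of "partial H i" p 0 w, OF dH1] by (simp add: inner2 grad_nth w1 w2 hess_def)
  have D: "DERIV \<psi> 0 :> (hess H p $1$1 * a + hess H p $2$1 * b) * a + (hess H p $1$2 * a + hess H p $2$2 * b) * b"
    unfolding \<psi>_def by (intro DERIV_add DERIV_cmult_right dd)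
  obtain r where r: "r > 0" "ball p r \<subseteq> S" using S p open_contains_ball by blast
  define b0 where "b0 = r / (norm w + 1)"
  have nw: "norm w + 1 > 0" using norm_ge_zero[of w] by linarith
  have b0: "b0 > 0" using r nw by (simp add: b0_def)
  have "l * (w \<bullet> w) \<le> (hess H p $1$1 * a + hess H p $2$1 * b) * a + (hess H p $1$2 * a + hess H p $2$2 * b) * b"
  proof (rule deriv_lower[OF D b0])
    fix t :: real assume t: "0 < t" "t < b0"
    define q where "q = p + t *\<^sub>R w"
    have "norm (t *\<^sub>R w) < r"
    proof -
      have "norm (t *\<^sub>R w) = t * norm w" using t by simp
      also have "\<dots> \<le> t * (norm w + 1)" using t by simp
      also have "\<dots> < b0 * (norm w + 1)" using t nw by (intro mult_strict_right_mono) auto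
      also have "\<dots> = r" using nw by (simp add: b0_def)
      finally show ?thesis .
    qed
    then have q: "q \<in> S" using r by (auto simp: q_def dist_norm subset_iff)
    have i1: "H p - l / 2 * (norm p)\<^sup>2 + (grad H p \<bullet> (q - p) - l * (p \<bullet> (q - p))) \<le> H q - l / 2 * (norm q)\<^sup>2"
      by (rule tangentH[OF cv S p q dH])
    have i2: "H q - l / 2 * (norm q)\<^sup>2 + (grad H q \<bullet> (p - q) - l * (q \<bullet> (p - q))) \<le> H p - l / 2 * (norm p)\<^sup>2"
      by (rule tangentH[OF cv S q p dH])
    have qp: "q - p = t *\<^sub>R w" "p - q = - (t *\<^sub>R w)" by (simp_all add: q_def)
    have "t * (grad H p \<bullet> w) - t * l * (p \<bullet> w) - t * (grad H q \<bullet> w) + t * l * (q \<bullet> w) \<le> 0"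
      using i1 i2 unfolding qp by (simp add: algebra_simps)
    moreover have "q \<bullet> w = p \<bullet> w + t * (w \<bullet> w)" by (simp add: q_def inner_add_left)
    ultimately have "t * (t * (l * (w \<bullet> w))) \<le> t * (\<psi> t - \<psi> 0)"
      unfolding \<psi>i q_def[symmetric] by (simp add: algebra_simps)
    then have "t * (l * (w \<bullet> w)) \<le> \<psi> t - \<psi> 0" using t by simp
    then show "l * (w \<bullet> w) \<le> (\<psi> t - \<psi> 0) / t" using t by (simp add: divide_simps mult.commute)
  qed
  then show ?thesis unfolding ww by (simp add: algebra_simps power2_eq_square)
qed

lemma ch2:
  fixes a b c p q r x y :: real
  shows "a * (p*x + q*y)^2 + 2*b*(p*x + q*y)*(q*x + r*y) + c*(q*x + r*y)^2
     - (a*p + 2*b*q + c*r) * (p*x^2 + 2*q*x*y + r*y^2)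
   = - (p*r - q^2) * (c*x^2 - 2*b*x*y + a*y^2)"
  by algebra

lemma minv2:
  fixes A :: "real^2^2" assumes d: "det A \<noteq> 0"
  shows "(matrix_inv A *v g) \<bullet> g = (A$2$2 * (g$1)\<^sup>2 - (A$1$2 + A$2$1) * g$1 * g$2 + A$1$1 * (g$2)\<^sup>2) / det A"
proof -
  define B :: "real^2^2" where "B = (\<chi> i j. if i = 1 then (if j = 1 then A$2$2 / det A else - A$1$2 / det A)
      else (if j = 1 then - A$2$1 / det A else A$1$1 / det A))"
  have dA: "det A = A$1$1*A$2$2 - A$1$2*A$2$1" by (simp add: det_2)
  have AB: "A ** B = mat 1" and BA: "B ** A = mat 1"
    using d by (auto simp: vec_eq_iff forall_2 matrix_matrix_mult_def sum_2 mat_def B_def field_simps)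
      (simp_all add: dA algebra_simps)
  have ex: "A ** matrix_inv A = mat 1 \<and> matrix_inv A ** A = mat 1"
    unfolding matrix_inv_def by (rule someI[of _ B]) (use AB BA in blast)
  have "matrix_inv A = matrix_inv A ** (A ** B)" by (simp add: AB)
  also have "\<dots> = (matrix_inv A ** A) ** B" by (simp add: matrix_mul_assoc)
  also have "\<dots> = B" using ex by simp
  finally have "matrix_inv A = B" .
  then show ?thesis using d
    by (simp add: B_def matrix_vector_mult_def inner2 sum_2 field_simps power2_eq_square)
qed

lemma Hloc:
  assumes sm: "smooth_on UNIV H" and h1: "H1' H" and h2: "H2 H"
  shows "\<exists>l>0. \<exists>S. open S \<and> 0 \<in> S \<and> {q. H q \<le> R0} \<subseteq> S \<and> convex_on S (\<lambda>z. H z - l / 2 * (norm z)\<^sup>2)"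
proof -
  obtain l R' where l: "l > 0" "R' > max R0 0" "convex_on {p. 0 \<le> H p \<and> H p < R'} (\<lambda>p. H p - l / 2 * (norm p)\<^sup>2)"
    using conv_get[OF h1, of "max R0 0"] by blast
  have H0: "H 0 = 0" "\<And>p. 0 \<le> H p" using h2 unfolding H2_def by auto
  have e: "{p. 0 \<le> H p \<and> H p < R'} = {p. H p < R'}" using H0 by auto
  have "open {p. H p < R'}"
    by (rule open_Collect_less[OF smooth_cont[OF sm] continuous_on_const])
  then show ?thesis using l H0 unfolding e by (intro exI[of _ l] conjI l(1) exI[of _ "{p. H p < R'}"]) auto
qed

lemma grad0: "smooth_on UNIV H \<Longrightarrow> H2 H \<Longrightarrow> grad H 0 = 0"
  using gradH0 by (simp add: vec_eq_iff grad_nth)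

lemma Hlow:
  assumes sm: "smooth_on UNIV H" and h1: "H1' H" and h2: "H2 H"
  shows "\<exists>l>0. \<exists>S. open S \<and> 0 \<in> S \<and> {q. H q \<le> R0} \<subseteq> S \<and>
     (\<forall>q\<in>S. l / 2 * (norm q)\<^sup>2 \<le> H q \<and> H q + l / 2 * (norm q)\<^sup>2 \<le> grad H q \<bullet> q) \<and>
     (\<forall>q\<in>S. \<forall>a b. l * (a\<^sup>2 + b\<^sup>2) \<le> hess H q $1$1 * a\<^sup>2 + (hess H q $1$2 + hess H q $2$1) * a * b + hess H q $2$2 * b\<^sup>2)"
proof -
  obtain l S where l: "l > 0" "open S" "0 \<in> S" "{q. H q \<le> R0} \<subseteq> S" and cv: "convex_on S (\<lambda>z. H z - l / 2 * (norm z)\<^sup>2)"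
    using Hloc[OF assms] by blast
  have dH: "\<And>z. H differentiable (at z)" using smooth_diff[OF sm] by auto
  have H0: "H 0 = 0" using h2 unfolding H2_def by auto
  have g0: "grad H 0 = 0" by (rule grad0[OF sm h2])
  have A: "l / 2 * (norm q)\<^sup>2 \<le> H q \<and> H q + l / 2 * (norm q)\<^sup>2 \<le> grad H q \<bullet> q" if q: "q \<in> S" for q
  proof
    show "l / 2 * (norm q)\<^sup>2 \<le> H q" using tangentH[OF cv l(2) l(3) q dH] H0 g0 by simp
    have "H q - l / 2 * (norm q)\<^sup>2 + (grad H q \<bullet> (0 - q) - l * (q \<bullet> (0 - q))) \<le> H 0 - l / 2 * (norm (0::real^2))\<^sup>2"
      by (rule tangentH[OF cv l(2) q l(3) dH])
    then show "H q + l / 2 * (norm q)\<^sup>2 \<le> grad H q \<bullet> q" using H0 by (simp add: power2_norm_eq_inner)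
  qed
  show ?thesis using A hess_lower[OF sm cv l(2)] l by blast
qed



lemma alg_det:
  fixes a11 a12 a22 m11 m12 m22 g1 g2 \<epsilon> l :: real
  assumes pde: "g1^2*m11 + 2*g1*g2*m12 + g2^2*m22 + \<epsilon> * (a11*m11 + 2*a12*m12 + a22*m22) = 0"
    and e: "\<epsilon> > 0" and l: "l > 0"
    and pd: "\<And>a b. l * (a^2 + b^2) \<le> a11*a^2 + 2*a12*a*b + a22*b^2"
  shows "0 \<le> - (m11*m22 - m12^2)"
proof (cases "g1 = 0 \<and> g2 = 0")
  case True
  then have tr: "a11*m11 + 2*a12*m12 + a22*m22 = 0" using pde e by simp
  have c: "a11*m11^2 + 2*a12*m11*m12 + a22*m12^2 = - (m11*m22 - m12^2) * a22"
    using ch2[where x=1 and y=0 and a=a11 and b=a12 and c=a22 and p=m11 and q=m12 and r=m22] tr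
    by (simp add: mult.assoc)
  have "l * (m11^2 + m12^2) \<le> a11*m11^2 + 2*a12*m11*m12 + a22*m12^2" using pd[of m11 m12] .
  moreover have "0 \<le> l * (m11^2 + m12^2)" using l by simp
  ultimately have "0 \<le> - (m11*m22 - m12^2) * a22" using c by linarith
  moreover have "a22 > 0" using pd[of 0 1] l by simp
  ultimately show ?thesis by (simp add: zero_le_mult_iff)
next
  case False
  have k: "l * (g2^2 + g1^2) \<le> a22*g1^2 - 2*a12*g1*g2 + a11*g2^2"
    using pd[of g2 "-g1"] by (simp add: algebra_simps)
  have "g2^2 + g1^2 > 0" using False by (auto simp: add_pos_nonneg sum_power2_gt_zero_iff)
  then have "0 < l * (g2^2 + g1^2)" using l by simp
  then have kpos: "a22*g1^2 - 2*a12*g1*g2 + a11*g2^2 > 0" using k by linarith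
  have gm: "m11*g1^2 + 2*m12*g1*g2 + m22*g2^2 = - \<epsilon> * (a11*m11 + 2*a12*m12 + a22*m22)"
    using pde by (simp add: algebra_simps)
  have c: "a11 * (m11*g1 + m12*g2)^2 + 2*a12*(m11*g1 + m12*g2)*(m12*g1 + m22*g2) + a22*(m12*g1 + m22*g2)^2
     + \<epsilon> * (a11*m11 + 2*a12*m12 + a22*m22)^2 = - (m11*m22 - m12^2) * (a22*g1^2 - 2*a12*g1*g2 + a11*g2^2)"
    using ch2[where x=g1 and y=g2 and a=a11 and b=a12 and c=a22 and p=m11 and q=m12 and r=m22] unfolding gm
    by (simp add: power2_eq_square algebra_simps)
  have "l * ((m11*g1 + m12*g2)^2 + (m12*g1 + m22*g2)^2) \<le> a11 * (m11*g1 + m12*g2)^2 + 2*a12*(m11*g1 + m12*g2)*(m12*g1 + m22*g2) + a22*(m12*g1 + m22*g2)^2"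
    using pd[of "m11*g1 + m12*g2" "m12*g1 + m22*g2"] by (simp add: mult.assoc)
  moreover have "0 \<le> l * ((m11*g1 + m12*g2)^2 + (m12*g1 + m22*g2)^2)" using l by simp
  moreover have "0 \<le> \<epsilon> * (a11*m11 + 2*a12*m12 + a22*m22)^2" using e by simp
  ultimately have "0 \<le> - (m11*m22 - m12^2) * (a22*g1^2 - 2*a12*g1*g2 + a11*g2^2)" using c by linarith
  then show ?thesis using kpos by (simp add: zero_le_mult_iff)
qed
lemma pd_facts:
  fixes a11 a12 a22 g1 g2 l :: real
  assumes l: "l > 0" and pd: "\<And>a b. l * (a^2 + b^2) \<le> a11*a^2 + 2*a12*a*b + a22*b^2"
  shows "a11*a22 - a12^2 > 0" and "(g1 \<noteq> 0 \<or> g2 \<noteq> 0) \<Longrightarrow> a22*g1^2 - 2*a12*g1*g2 + a11*g2^2 > 0"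
proof -
  have a11: "a11 > 0" using pd[of 1 0] l by simp
  have "l * (a12^2 + a11^2) \<le> a11*a12^2 + 2*a12*a12*(-a11) + a22*(-a11)^2" using pd[of a12 "-a11"] by simp
  moreover have "l * (a12^2 + a11^2) > 0" using l a11 by (simp add: add_nonneg_pos)
  ultimately have "0 < a11 * (a11*a22 - a12^2)" by (simp add: power2_eq_square algebra_simps)
  then show "a11*a22 - a12^2 > 0" using a11 by (simp add: zero_less_mult_iff)
next
  assume g: "g1 \<noteq> 0 \<or> g2 \<noteq> 0"
  have k: "l * (g2^2 + g1^2) \<le> a22*g1^2 - 2*a12*g1*g2 + a11*g2^2"
    using pd[of g2 "-g1"] by (simp add: algebra_simps)
  have "g2^2 + g1^2 > 0" using g by (auto simp: add_pos_nonneg sum_power2_gt_zero_iff)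
  then have "0 < l * (g2^2 + g1^2)" using l by simp
  then show "a22*g1^2 - 2*a12*g1*g2 + a11*g2^2 > 0" using k by linarith
qed


lemma alg_id:
  fixes a11 a12 a22 m11 m12 m22 g1 g2 \<epsilon> h s z1 z2 :: real
  assumes pde: "g1^2*m11 + 2*g1*g2*m12 + g2^2*m22 + \<epsilon> * (a11*m11 + 2*a12*m12 + a22*m22) = 0"
    and dA: "a11*a22 - a12^2 \<noteq> 0" and k: "a22*g1^2 - 2*a12*g1*g2 + a11*g2^2 \<noteq> 0"
    and s0: "s > 0" and s: "h = s * s"
    and z1: "z1 = (g1*m11 + g2*m12) / (2 * s)" and z2: "z2 = (g1*m12 + g2*m22) / (2 * s)"
  shows "- (m11*m22 - m12^2) * (a11*a22 - a12^2) =
     4 * (h / ((a22*g1^2 - 2*a12*g1*g2 + a11*g2^2) / (a11*a22 - a12^2))) * ((a11*z1 + a12*z2)*z1 + (a12*z1 + a22*z2)*z2)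
     + (h / ((a22*g1^2 - 2*a12*g1*g2 + a11*g2^2) / (a11*a22 - a12^2))) * (\<epsilon> * (a11*m11 + 2*a12*m12 + a22*m22)^2 / h)"
proof -
  define K where "K = a22*g1^2 - 2*a12*g1*g2 + a11*g2^2"
  define D where "D = a11*a22 - a12^2"
  define T where "T = a11*m11 + 2*a12*m12 + a22*m22"
  define c1 where "c1 = g1*m11 + g2*m12"
  define c2 where "c2 = g1*m12 + g2*m22"
  define Qc where "Qc = a11 * c1^2 + 2*a12*c1*c2 + a22*c2^2"
  have h: "h > 0" using s0 s by simp
  have av: "(a11*z1 + a12*z2)*z1 + (a12*z1 + a22*z2)*z2 = Qc / (4*h)"
  proof -
    have "(a11*z1 + a12*z2)*z1 + (a12*z1 + a22*z2)*z2 = (a11 * c1^2 + 2*a12*c1*c2 + a22*c2^2) / (4*(s * s))"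
      unfolding z1 z2 c1_def[symmetric] c2_def[symmetric] using s0
      by (simp add: divide_simps power2_eq_square) (simp add: algebra_simps)
    then show ?thesis unfolding s Qc_def .
  qed
  have gm: "m11*g1^2 + 2*m12*g1*g2 + m22*g2^2 = - \<epsilon> * T"
    using pde by (simp add: algebra_simps T_def)
  have c: "Qc + \<epsilon> * T^2 = - (m11*m22 - m12^2) * K"
  proof -
    have "Qc - T * (m11*g1^2 + 2*m12*g1*g2 + m22*g2^2) = - (m11*m22 - m12^2) * K"
      using ch2[where x=g1 and y=g2 and a=a11 and b=a12 and c=a22 and p=m11 and q=m12 and r=m22]
      unfolding Qc_def K_def T_def c1_def c2_def by (simp add: algebra_simps)
    then show ?thesis unfolding gm by (simp add: power2_eq_square algebra_simps)
  qed
  have "4 * (h / (K / D)) * (Qc / (4*h)) + (h / (K / D)) * (\<epsilon> * T^2 / h) = D / K * (Qc + \<epsilon> * T^2)"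
    using h dA k unfolding K_def[symmetric] D_def[symmetric] by (simp add: field_simps)
  also have "\<dots> = - (m11*m22 - m12^2) * D" unfolding c using k K_def by simp
  finally show ?thesis unfolding av[symmetric] K_def D_def T_def by simp
qed

lemma divDH_eq:
  assumes smH: "smooth_on UNIV H" and sm: "smooth_on U u" and U: "open U" and x: "x \<in> U"
  shows "divDH H u x = (\<Sum>i\<in>UNIV. \<Sum>k\<in>UNIV. hess H (grad u x) $ k $ i * hess u x $ i $ k)"
proof -
  have "partial (\<lambda>y. grad H (grad u y) $ i) i x = (\<Sum>k\<in>UNIV. hess H (grad u x) $ k $ i * hess u x $ i $ k)" for i
  proof -
    have d: "partial H i differentiable (at (grad u x))"
      using smooth_diff[OF smooth_partial[OF smH]] by auto
    show ?thesis unfolding grad_nth comp_partial[OF sm U x d] by (simp add: hess_def)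
  qed
  then show ?thesis unfolding divDH_def by simp
qed

lemma PD_at:
  assumes smH: "smooth_on UNIV H" and h1: "H1' H" and h2: "H2 H"
  shows "\<exists>l>0. l / 2 * (norm p)\<^sup>2 \<le> H p \<and> H p + l / 2 * (norm p)\<^sup>2 \<le> grad H p \<bullet> p \<and>
    (\<forall>a b. l * (a\<^sup>2 + b\<^sup>2) \<le> hess H p $1$1 * a\<^sup>2 + 2 * hess H p $1$2 * a * b + hess H p $2$2 * b\<^sup>2)"
proof -
  obtain l S where l: "l > 0" and oS: "open S" and S0: "0 \<in> S" and l2: "{q. H q \<le> H p} \<subseteq> S"
    and A: "\<forall>q\<in>S. l / 2 * (norm q)\<^sup>2 \<le> H q \<and> H q + l / 2 * (norm q)\<^sup>2 \<le> grad H q \<bullet> q"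
    and B: "\<forall>q\<in>S. \<forall>a b. l * (a\<^sup>2 + b\<^sup>2) \<le> hess H q $1$1 * a\<^sup>2 + (hess H q $1$2 + hess H q $2$1) * a * b + hess H q $2$2 * b\<^sup>2"
    using Hlow[OF assms, of "H p"] by (elim exE conjE) (rule that; assumption)
  have p: "p \<in> S" using l2 by auto
  have sym: "hess H p $ 1 $ 2 = hess H p $ 2 $ 1" by (rule schwarz[OF smH open_UNIV]) simp
  have B': "l * (a\<^sup>2 + b\<^sup>2) \<le> hess H p $1$1 * a\<^sup>2 + 2 * hess H p $1$2 * a * b + hess H p $2$2 * b\<^sup>2" for a b
  proof -
    have "l * (a\<^sup>2 + b\<^sup>2) \<le> hess H p $1$1 * a\<^sup>2 + (hess H p $1$2 + hess H p $2$1) * a * b + hess H p $2$2 * b\<^sup>2"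
      using bspec[OF B p] by blast
    then show ?thesis unfolding sym[symmetric] by (simp add: algebra_simps)
  qed
  have A': "l / 2 * (norm p)\<^sup>2 \<le> H p \<and> H p + l / 2 * (norm p)\<^sup>2 \<le> grad H p \<bullet> p" using bspec[OF A p] .
  show ?thesis by (intro exI[of _ l] conjI allI l A'[THEN conjunct1] A'[THEN conjunct2] B')
qed

lemma det_nonneg:
  assumes smH: "smooth_on UNIV H" and h1: "H1' H" and h2: "H2 H"
    and sm: "smooth_on U u" and U: "open U" and x: "x \<in> U" and e: "\<epsilon> > 0"
    and pde: "AH H u x + \<epsilon> * divDH H u x = 0"
  shows "0 \<le> - det (hess u x)"
proof -
  define p where "p = grad u x"
  define A where "A = hess H p"
  define M where "M = hess u x"
  define g where "g = grad H p"
  have symM: "M $ 1 $ 2 = M $ 2 $ 1" unfolding M_def by (rule schwarz[OF sm U x])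
  have symA: "A $ 1 $ 2 = A $ 2 $ 1" unfolding A_def by (rule schwarz[OF smH open_UNIV]) simp
  obtain l where l: "l > 0" and pd: "\<And>a b. l * (a\<^sup>2 + b\<^sup>2) \<le> A$1$1 * a\<^sup>2 + 2 * A$1$2 * a * b + A$2$2 * b\<^sup>2"
    using PD_at[OF smH h1 h2, of p] unfolding A_def by blast
  have pde': "(g$1)^2*M$1$1 + 2*g$1*g$2*M$1$2 + (g$2)^2*M$2$2 + \<epsilon> * (A$1$1*M$1$1 + 2*A$1$2*M$1$2 + A$2$2*M$2$2) = 0"
  proof -
    have AHe: "AH H u x = (g$1)^2*M$1$1 + 2*g$1*g$2*M$1$2 + (g$2)^2*M$2$2"
      unfolding AH_def sum_2 p_def[symmetric] g_def[symmetric] M_def[symmetric] using symM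
      by (simp add: power2_eq_square algebra_simps)
    have dive: "divDH H u x = A$1$1*M$1$1 + 2*A$1$2*M$1$2 + A$2$2*M$2$2"
      unfolding divDH_eq[OF smH sm U x] sum_2 p_def[symmetric] A_def[symmetric] M_def[symmetric]
      using symM symA by (simp add: algebra_simps)
    show ?thesis using pde unfolding AHe dive .
  qed
  have "0 \<le> - (M$1$1 * M$2$2 - (M$1$2)^2)"
    by (rule alg_det[OF pde' e l pd])
  moreover have "det M = M$1$1 * M$2$2 - (M$1$2)^2" unfolding det_2 symM by (simp add: power2_eq_square)
  ultimately show ?thesis unfolding M_def by simp
qed



lemma AH_div_eq:
  assumes smH: "smooth_on UNIV H" and sm: "smooth_on U u" and U: "open U" and x: "x \<in> U"
  shows "AH H u x = (grad H (grad u x) $ 1)^2 * hess u x $1$1 + 2 * grad H (grad u x) $ 1 * grad H (grad u x) $ 2 * hess u x $1$2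
           + (grad H (grad u x) $ 2)^2 * hess u x $2$2"
    and "divDH H u x = hess H (grad u x) $1$1 * hess u x $1$1 + 2 * hess H (grad u x) $1$2 * hess u x $1$2
           + hess H (grad u x) $2$2 * hess u x $2$2"
proof -
  define p where "p = grad u x"
  define A where "A = hess H p"
  define M where "M = hess u x"
  define g where "g = grad H p"
  have symM: "M $ 1 $ 2 = M $ 2 $ 1" unfolding M_def by (rule schwarz[OF sm U x])
  have symA: "A $ 1 $ 2 = A $ 2 $ 1" unfolding A_def by (rule schwarz[OF smH open_UNIV]) simp
  show "AH H u x = (grad H (grad u x) $ 1)^2 * hess u x $1$1 + 2 * grad H (grad u x) $ 1 * grad H (grad u x) $ 2 * hess u x $1$2
           + (grad H (grad u x) $ 2)^2 * hess u x $2$2"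
    unfolding AH_def sum_2 p_def[symmetric] g_def[symmetric] M_def[symmetric] using symM
    by (simp add: power2_eq_square algebra_simps)
  show "divDH H u x = hess H (grad u x) $1$1 * hess u x $1$1 + 2 * hess H (grad u x) $1$2 * hess u x $1$2
           + hess H (grad u x) $2$2 * hess u x $2$2"
    unfolding divDH_eq[OF smH sm U x] sum_2 p_def[symmetric] A_def[symmetric] M_def[symmetric]
    using symM symA by (simp add: algebra_simps)
qed

lemma ident_nz:
  assumes smH: "smooth_on UNIV H" and h1: "H1' H" and h2: "H2 H"
    and sm: "smooth_on U u" and U: "open U" and x: "x \<in> U"
    and pde: "AH H u x + \<epsilon> * divDH H u x = 0"
    and p0: "grad u x \<noteq> 0"
  shows "(- det (hess u x)) * det (hess H (grad u x)) =
          4 * tauH H (grad u x) *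
            ((hess H (grad u x) *v grad (\<lambda>y. sqrt (H (grad u y))) x)
               \<bullet> grad (\<lambda>y. sqrt (H (grad u y))) x)
          + tauH H (grad u x) *
            (if grad u x = 0 then 0
             else \<epsilon> * (divDH H u x)\<^sup>2 / H (grad u x))"
proof -
  define p where "p = grad u x"
  define A where "A = hess H p"
  define M where "M = hess u x"
  define g where "g = grad H p"
  define gs where "gs = grad (\<lambda>y. sqrt (H (grad u y))) x"
  have symM: "M $ 1 $ 2 = M $ 2 $ 1" unfolding M_def by (rule schwarz[OF sm U x])
  have symA: "A $ 1 $ 2 = A $ 2 $ 1" unfolding A_def by (rule schwarz[OF smH open_UNIV]) simp
  obtain l where l: "l > 0" and low: "l / 2 * (norm p)\<^sup>2 \<le> H p" and gp: "H p + l / 2 * (norm p)\<^sup>2 \<le> g \<bullet> p"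
    and pd: "\<And>a b. l * (a\<^sup>2 + b\<^sup>2) \<le> A$1$1 * a\<^sup>2 + 2 * A$1$2 * a * b + A$2$2 * b\<^sup>2"
    using PD_at[OF smH h1 h2, of p] unfolding A_def g_def by blast
  have np: "norm p > 0" using p0 p_def by simp
  have hp: "H p > 0"
  proof -
    have "0 < l / 2 * (norm p)\<^sup>2" using l np by simp
    then show ?thesis using low by linarith
  qed
  have "g \<bullet> p > 0" using gp hp l np by (smt (verit) zero_le_power2 mult_nonneg_nonneg divide_nonneg_pos)
  then have "g \<noteq> 0" by auto
  then have gnz: "g$1 \<noteq> 0 \<or> g$2 \<noteq> 0" by (auto simp: vec_eq_iff forall_2)
  have dA: "A$1$1 * A$2$2 - (A$1$2)^2 > 0" using pd_facts(1)[OF l pd] .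
  have k: "A$2$2 * (g$1)^2 - 2 * A$1$2 * g$1 * g$2 + A$1$1 * (g$2)^2 > 0" using pd_facts(2)[OF l pd gnz] .
  have dH: "H differentiable (at (grad u x))" using smooth_diff[OF smH] by auto
  have hp': "H (grad u x) > 0" using hp p_def by simp
  have gs1: "gs $ 1 = (g$1 * M$1$1 + g$2 * M$1$2) / (2 * sqrt (H p))"
    unfolding gs_def grad_nth sqrt_partial[OF sm U x dH hp'] sum_2
    by (simp add: p_def[symmetric] g_def M_def grad_nth)
  have gs2: "gs $ 2 = (g$1 * M$1$2 + g$2 * M$2$2) / (2 * sqrt (H p))"
    unfolding gs_def grad_nth sqrt_partial[OF sm U x dH hp'] sum_2
    by (simp add: p_def[symmetric] g_def M_def grad_nth symM[unfolded M_def])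
  have detA: "det A = A$1$1 * A$2$2 - (A$1$2)^2" unfolding det_2 symA by (simp add: power2_eq_square)
  have detM: "det M = M$1$1 * M$2$2 - (M$1$2)^2" unfolding det_2 symM by (simp add: power2_eq_square)
  have tau: "tauH H p = H p / ((A$2$2 * (g$1)^2 - 2 * A$1$2 * g$1 * g$2 + A$1$1 * (g$2)^2) / (A$1$1 * A$2$2 - (A$1$2)^2))"
  proof -
    have "det A \<noteq> 0" using dA detA by simp
    from minv2[OF this, of g]
    have mi: "(matrix_inv A *v g) \<bullet> g = (A$2$2 * (g$1)^2 - (A$1$2 + A$2$1) * g$1 * g$2 + A$1$1 * (g$2)^2) / det A" .
    have e2: "(A$1$2 + A$2$1) * g$1 * g$2 = 2 * A$1$2 * g$1 * g$2" using symA by simp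
    have "tauH H p = H p / ((matrix_inv A *v g) \<bullet> g)"
      unfolding tauH_def A_def g_def using p0 p_def by simp
    then show ?thesis unfolding mi e2 detA .
  qed
  have quad: "(A *v gs) \<bullet> gs = (A$1$1 * gs$1 + A$1$2 * gs$2) * gs$1 + (A$1$2 * gs$1 + A$2$2 * gs$2) * gs$2"
    by (simp add: matrix_vector_mult_def inner2 sum_2 symA)
  have pde': "(g$1)^2*M$1$1 + 2*g$1*g$2*M$1$2 + (g$2)^2*M$2$2 + \<epsilon> * (A$1$1*M$1$1 + 2*A$1$2*M$1$2 + A$2$2*M$2$2) = 0"
    using pde unfolding AH_div_eq[OF smH sm U x] p_def[symmetric] A_def[symmetric] M_def[symmetric] g_def[symmetric] .
  have div: "divDH H u x = A$1$1*M$1$1 + 2*A$1$2*M$1$2 + A$2$2*M$2$2"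
    unfolding AH_div_eq[OF smH sm U x] p_def[symmetric] A_def[symmetric] M_def[symmetric] ..
  have sq: "H p = sqrt (H p) * sqrt (H p)" using hp by simp
  have main: "- (M$1$1 * M$2$2 - (M$1$2)^2) * (A$1$1 * A$2$2 - (A$1$2)^2) =
     4 * (H p / ((A$2$2 * (g$1)^2 - 2 * A$1$2 * g$1 * g$2 + A$1$1 * (g$2)^2) / (A$1$1 * A$2$2 - (A$1$2)^2))) *
        ((A$1$1 * gs$1 + A$1$2 * gs$2) * gs$1 + (A$1$2 * gs$1 + A$2$2 * gs$2) * gs$2)
     + (H p / ((A$2$2 * (g$1)^2 - 2 * A$1$2 * g$1 * g$2 + A$1$1 * (g$2)^2) / (A$1$1 * A$2$2 - (A$1$2)^2))) *
        (\<epsilon> * (A$1$1*M$1$1 + 2*A$1$2*M$1$2 + A$2$2*M$2$2)^2 / H p)"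
    by (rule alg_id[OF pde' _ _ _ sq gs1 gs2]) (use dA k hp in auto)
  have p0': "p \<noteq> 0" using p0 p_def by simp
  show ?thesis
    unfolding p_def[symmetric] A_def[symmetric] M_def[symmetric] gs_def[symmetric] tau quad div detA detM
    using main p0' by simp
qed



lemma norm_le_sqrtH:
  fixes q :: "real^2"
  assumes l: "l > 0" and low: "l / 2 * (norm q)\<^sup>2 \<le> Hq"
  shows "norm q \<le> sqrt (2 / l) * sqrt Hq"
proof -
  have "(norm q)\<^sup>2 \<le> 2 / l * Hq" using low l by (simp add: field_simps)
  then have "sqrt ((norm q)\<^sup>2) \<le> sqrt (2 / l * Hq)" by (rule real_sqrt_le_mono)
  moreover have "sqrt (2 / l * Hq) = sqrt (2 / l) * sqrt Hq" by (rule real_sqrt_mult)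
  ultimately show ?thesis by simp
qed

lemma zero_case:
  assumes smH: "smooth_on UNIV H" and h1: "H1' H" and h2: "H2 H"
    and sm: "smooth_on U u" and U: "open U" and x: "x \<in> U"
    and p0: "grad u x = 0" and dif: "(\<lambda>y. sqrt (H (grad u y))) differentiable (at x)"
  shows "grad (\<lambda>y. sqrt (H (grad u y))) x = 0" and "det (hess u x) = 0"
proof -
  define \<phi> where "\<phi> = (\<lambda>y. sqrt (H (grad u y)))"
  have H0: "H 0 = 0" and Hnn: "\<And>q. 0 \<le> H q" using h2 unfolding H2_def by auto
  have \<phi>x: "\<phi> x = 0" using p0 H0 by (simp add: \<phi>_def)
  have \<phi>nn: "\<And>y. 0 \<le> \<phi> y" by (simp add: \<phi>_def Hnn)
  have d\<phi>: "(\<phi> has_derivative (\<lambda>h. grad \<phi> x \<bullet> h)) (at x)"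
    unfolding \<phi>_def by (rule frechet_grad[OF dif])
  have "eventually (\<lambda>y. \<phi> x \<le> \<phi> y) (at x)" using \<phi>x \<phi>nn by simp
  from has_derivative_local_min[OF d\<phi> this] have z: "(\<lambda>h. grad \<phi> x \<bullet> h) = (\<lambda>h. 0)" .
  have g0: "grad \<phi> x = 0"
  proof -
    have "grad \<phi> x \<bullet> axis i 1 = 0" for i using z by metis
    then show ?thesis by (simp add: vec_eq_iff inner_axis2)
  qed
  then show "grad (\<lambda>y. sqrt (H (grad u y))) x = 0" unfolding \<phi>_def .
  have d\<phi>0: "(\<phi> has_derivative (\<lambda>h. 0)) (at x)" using d\<phi> z by simp
  obtain l S where l: "l > 0" and oS: "open S" and S0: "0 \<in> S" and l2: "{q. H q \<le> 0} \<subseteq> S"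
    and A: "\<forall>q\<in>S. l / 2 * (norm q)\<^sup>2 \<le> H q \<and> H q + l / 2 * (norm q)\<^sup>2 \<le> grad H q \<bullet> q"
    and B: "\<forall>q\<in>S. \<forall>a b. l * (a\<^sup>2 + b\<^sup>2) \<le> hess H q $1$1 * a\<^sup>2 + (hess H q $1$2 + hess H q $2$1) * a * b + hess H q $2$2 * b\<^sup>2"
    using Hlow[OF smH h1 h2, of 0] by (elim exE conjE) (rule that; assumption)
  define c where "c = sqrt (2 / l)"
  have dgu: "((\<lambda>y. grad u y) has_derivative (\<lambda>h. \<chi> k. grad (partial u k) x \<bullet> h)) (at x)"
    by (rule grad_vec_deriv[OF sm U x])
  have "continuous (at x) (\<lambda>y. grad u y)" by (rule has_derivative_continuous[OF dgu])
  then have "((\<lambda>y. grad u y) \<longlongrightarrow> grad u x) (at x)" by (simp add: continuous_at)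
  from topological_tendstoD[OF this oS] S0 p0 have "eventually (\<lambda>y. grad u y \<in> S) (at x)" by simp
  then have ev: "eventually (\<lambda>h. grad u (h + x) \<in> S) (at 0)" by (simp only: eventually_at_to_0[of _ x])
  have "((\<lambda>h. norm (\<phi> (x + h) - \<phi> x - 0) / norm h) \<longlongrightarrow> 0) (at 0)"
    using d\<phi>0 unfolding has_derivative_at by blast
  then have t: "((\<lambda>h. c * (norm (\<phi> (x + h) - \<phi> x - 0) / norm h)) \<longlongrightarrow> 0) (at 0)"
    by (rule tendsto_mult_right_zero)
  have "((\<lambda>h. norm (grad u (x + h) - grad u x - 0) / norm h) \<longlongrightarrow> 0) (at 0)"
  proof (rule Lim_null_comparison[OF _ t])
    show "\<forall>\<^sub>F h in at 0. norm (norm (grad u (x + h) - grad u x - 0) / norm h) \<le> c * (norm (\<phi> (x + h) - \<phi> x - 0) / norm h)"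
      using ev
    proof (rule eventually_mono)
      fix h :: "real^2" assume hS: "grad u (h + x) \<in> S"
      have "norm (grad u (x + h)) \<le> c * \<phi> (x + h)"
        using norm_le_sqrtH[OF l, of "grad u (x + h)" "H (grad u (x + h))"] A hS
        by (simp add: c_def \<phi>_def add.commute)
      then have "norm (grad u (x + h)) / norm h \<le> c * \<phi> (x + h) / norm h"
        by (simp add: divide_right_mono)
      then show "norm (norm (grad u (x + h) - grad u x - 0) / norm h) \<le> c * (norm (\<phi> (x + h) - \<phi> x - 0) / norm h)"
        using p0 \<phi>x \<phi>nn by simp
    qed
  qed
  then have "((\<lambda>y. grad u y) has_derivative (\<lambda>h. 0)) (at x)"
    unfolding has_derivative_at by simp
  from has_derivative_unique[OF dgu this] have z2: "(\<lambda>h. \<chi> k. grad (partial u k) x \<bullet> h) = (\<lambda>h. 0 :: real^2)" .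
  have "hess u x $ i $ k = 0" for i k
  proof -
    have "(\<chi> k. grad (partial u k) x \<bullet> axis i 1) = (0 :: real^2)" using z2 by metis
    then have "grad (partial u k) x \<bullet> axis i 1 = 0" by (metis vec_lambda_beta zero_index)
    then show ?thesis by (simp add: inner_axis2 hess_def grad_nth)
  qed
  then show "det (hess u x) = 0" by (simp add: det_2)
qed



lemma grad_cont: "smooth_on U f \<Longrightarrow> continuous_on U (grad f)"
  unfolding grad_def by (intro continuous_on_vec_lambda smooth_cont smooth_partial)

lemma scal_lip:
  assumes sm: "smooth_on U f" and U: "open U" and K: "K \<subseteq> U" and cK: "compact K" and cvK: "convex K"
  shows "\<exists>B\<ge>0. \<forall>y\<in>K. \<forall>z\<in>K. \<bar>f y - f z\<bar> \<le> B * norm (y - z)"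
proof -
  have "compact (grad f ` K)"
    by (rule compact_continuous_image[OF continuous_on_subset[OF grad_cont[OF sm] K] cK])
  then have "bounded (grad f ` K)" by (rule compact_imp_bounded)
  from this[unfolded bounded_iff] obtain B0 where B0: "\<forall>v\<in>grad f ` K. norm v \<le> B0" ..
  define B where "B = max B0 0"
  have d: "(f has_derivative (\<lambda>h. grad f y \<bullet> h)) (at y within K)" if "y \<in> K" for y
  proof -
    have "y \<in> U" using that K by auto
    then show ?thesis by (rule has_derivative_at_withinI[OF frechet_grad[OF smooth_diff[OF sm U]]])
  qed
  have o: "onorm (\<lambda>h. grad f y \<bullet> h) \<le> B" if "y \<in> K" for y
  proof -
    have "onorm (\<lambda>h. grad f y \<bullet> h) \<le> norm (grad f y) * onorm (\<lambda>h::real^2. h)"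
      by (rule onorm_inner_right[OF bounded_linear_ident])
    also have "\<dots> = norm (grad f y)" by (simp add: onorm_id)
    also have "\<dots> \<le> B" using B0 that by (auto simp: B_def)
    finally show ?thesis .
  qed
  have "\<forall>y\<in>K. \<forall>z\<in>K. \<bar>f y - f z\<bar> \<le> B * norm (y - z)"
    using differentiable_bound[OF cvK d o] by auto
  moreover have "B \<ge> 0" by (simp add: B_def)
  ultimately show ?thesis by blast
qed

lemma grad_lip:
  assumes sm: "smooth_on U u" and U: "open U" and K: "K \<subseteq> U" and cK: "compact K" and cvK: "convex K"
  shows "\<exists>B\<ge>0. \<forall>y\<in>K. \<forall>z\<in>K. norm (grad u y - grad u z) \<le> B * norm (y - z)"
proof -
  obtain B1 where B1: "B1 \<ge> 0" "\<forall>y\<in>K. \<forall>z\<in>K. \<bar>partial u 1 y - partial u 1 z\<bar> \<le> B1 * norm (y - z)"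
    using scal_lip[OF smooth_partial[OF sm] U K cK cvK] by blast
  obtain B2 where B2: "B2 \<ge> 0" "\<forall>y\<in>K. \<forall>z\<in>K. \<bar>partial u 2 y - partial u 2 z\<bar> \<le> B2 * norm (y - z)"
    using scal_lip[OF smooth_partial[OF sm] U K cK cvK] by blast
  have "norm (grad u y - grad u z) \<le> (B1 + B2) * norm (y - z)" if "y \<in> K" "z \<in> K" for y z
  proof -
    have "norm (grad u y - grad u z) \<le> \<bar>partial u 1 y - partial u 1 z\<bar> + \<bar>partial u 2 y - partial u 2 z\<bar>"
      using norm_le_l1_cart[of "grad u y - grad u z"] by (simp add: sum_2 grad_nth)
    also have "\<dots> \<le> B1 * norm (y - z) + B2 * norm (y - z)" using B1 B2 that by (intro add_mono) auto
    finally show ?thesis by (simp add: algebra_simps)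
  qed
  then show ?thesis using B1 B2 by (intro exI[of _ "B1 + B2"]) auto
qed

lemma sqrt_diff_bound:
  fixes a b d :: real
  assumes a: "a > 0" and b: "b \<ge> 0" and d0: "d \<ge> 0" and d: "a * a - b * b \<le> a * d"
  shows "a - b \<le> d"
proof (cases "a \<le> b")
  case True
  then show ?thesis using d0 by linarith
next
  case False
  have "a * (a - b) \<le> a * a - b * b" using False b by (simp add: algebra_simps mult_right_mono)
  then have "a * (a - b) \<le> a * d" using d by linarith
  then show ?thesis using a by simp
qed

lemma sqrtH_lip:
  assumes smH: "smooth_on UNIV H" and h1: "H1' H" and h2: "H2 H"
  shows "\<exists>C\<ge>0. \<forall>p\<in>cball 0 \<rho>. \<forall>q\<in>cball 0 \<rho>. \<bar>sqrt (H p) - sqrt (H q)\<bar> \<le> C * norm (p - q)"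
proof -
  have H0: "H 0 = 0" and Hnn: "\<And>q. 0 \<le> H q" using h2 unfolding H2_def by auto
  have "compact (H ` cball 0 \<rho>)"
    by (rule compact_continuous_image[OF continuous_on_subset[OF smooth_cont[OF smH]] compact_cball]) simp
  then have "bounded (H ` cball 0 \<rho>)" by (rule compact_imp_bounded)
  from this[unfolded bounded_iff] obtain R0 where R0: "\<forall>v\<in>H ` cball 0 \<rho>. norm v \<le> R0" ..
  obtain l S where l: "l > 0" and oS: "open S" and S0: "0 \<in> S" and l2: "{q. H q \<le> R0} \<subseteq> S"
    and cv: "convex_on S (\<lambda>z. H z - l / 2 * (norm z)\<^sup>2)"
    using Hloc[OF smH h1 h2, of R0] by (elim exE conjE) (rule that; assumption)
  have KS: "cball 0 \<rho> \<subseteq> S" using R0 l2 by force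
  have dH: "\<And>z. H differentiable (at z)" using smooth_diff[OF smH] by auto
  have g0: "grad H 0 = 0" by (rule grad0[OF smH h2])
  have low: "l / 2 * (norm q)\<^sup>2 \<le> H q" if "q \<in> S" for q
    using tangentH[OF cv oS S0 that dH] H0 g0 by simp
  have tan: "H p - H q \<le> grad H p \<bullet> (p - q)" if "p \<in> S" "q \<in> S" for p q
  proof -
    have t: "H p - l / 2 * (norm p)\<^sup>2 + (grad H p \<bullet> (q - p) - l * (p \<bullet> (q - p))) \<le> H q - l / 2 * (norm q)\<^sup>2"
      by (rule tangentH[OF cv oS that dH])
    have e: "(norm p)\<^sup>2 - (norm q)\<^sup>2 + 2 * (p \<bullet> (q - p)) = - (norm (p - q))\<^sup>2"
      by (simp add: power2_norm_eq_inner inner_diff_left inner_diff_right inner_commute algebra_simps)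
    have "l / 2 * ((norm p)\<^sup>2 - (norm q)\<^sup>2 + 2 * (p \<bullet> (q - p))) \<le> 0" unfolding e using l by simp
    moreover have "grad H p \<bullet> (q - p) = - (grad H p \<bullet> (p - q))" by (simp add: inner_diff_right)
    ultimately show ?thesis using t by (simp add: algebra_simps)
  qed
  obtain B1 where B1: "B1 \<ge> 0" "\<forall>y\<in>cball 0 \<rho>. \<forall>z\<in>cball 0 \<rho>. \<bar>partial H 1 y - partial H 1 z\<bar> \<le> B1 * norm (y - z)"
    using scal_lip[OF smooth_partial[OF smH] open_UNIV _ compact_cball convex_cball] by blast
  obtain B2 where B2: "B2 \<ge> 0" "\<forall>y\<in>cball 0 \<rho>. \<forall>z\<in>cball 0 \<rho>. \<bar>partial H 2 y - partial H 2 z\<bar> \<le> B2 * norm (y - z)"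
    using scal_lip[OF smooth_partial[OF smH] open_UNIV _ compact_cball convex_cball] by blast
  define C where "C = (B1 + B2) * sqrt (2 / l)"
  have C0: "C \<ge> 0" using B1 B2 l by (simp add: C_def)
  have gb: "norm (grad H p) \<le> (B1 + B2) * norm p" if "p \<in> cball 0 \<rho>" for p
  proof -
    have "norm p \<le> \<rho>" using that by (simp add: dist_norm)
    then have z: "(0::real^2) \<in> cball 0 \<rho>" using norm_ge_zero[of p] by (simp only: mem_cball dist_self)
    have "norm (grad H p) \<le> \<bar>partial H 1 p\<bar> + \<bar>partial H 2 p\<bar>"
      using norm_le_l1_cart[of "grad H p"] by (simp add: sum_2 grad_nth)
    also have "\<dots> = \<bar>partial H 1 p - partial H 1 0\<bar> + \<bar>partial H 2 p - partial H 2 0\<bar>"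
      using gradH0[OF smH h2] by simp
    also have "\<dots> \<le> B1 * norm (p - 0) + B2 * norm (p - 0)"
      using B1(2)[rule_format, OF that z] B2(2)[rule_format, OF that z] by (rule add_mono)
    finally show ?thesis by (simp add: algebra_simps)
  qed
  have one: "sqrt (H p) - sqrt (H q) \<le> C * norm (p - q)" if p: "p \<in> cball 0 \<rho>" and q: "q \<in> cball 0 \<rho>" for p q
  proof (cases "p = 0")
    case True
    have "0 \<le> sqrt (H q)" using Hnn[of q] by simp
    moreover have "0 \<le> C * norm (p - q)" using C0 by simp
    moreover have "sqrt (H p) = 0" using True H0 by simp
    ultimately show ?thesis by linarith
  next
    case False
    have pS: "p \<in> S" and qS: "q \<in> S" using KS p q by auto
    have "0 < l / 2 * (norm p)\<^sup>2" using l False by simp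
    then have hp: "H p > 0" using low[OF pS] by linarith
    have np: "norm p \<le> sqrt (2 / l) * sqrt (H p)" by (rule norm_le_sqrtH[OF l low[OF pS]])
    have "H p - H q \<le> norm (grad H p) * norm (p - q)"
      using tan[OF pS qS] norm_cauchy_schwarz[of "grad H p" "p - q"] by linarith
    also have "\<dots> \<le> (B1 + B2) * norm p * norm (p - q)" using gb[OF p] by (simp add: mult_right_mono)
    also have "\<dots> \<le> (B1 + B2) * (sqrt (2 / l) * sqrt (H p)) * norm (p - q)"
    proof -
      have "(B1 + B2) * norm p \<le> (B1 + B2) * (sqrt (2 / l) * sqrt (H p))"
        by (rule mult_left_mono[OF np]) (use B1 B2 in simp)
      then show ?thesis by (rule mult_right_mono) simp
    qed
    also have "\<dots> = sqrt (H p) * (C * norm (p - q))" by (simp add: C_def algebra_simps)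
    finally have "sqrt (H p) * sqrt (H p) - sqrt (H q) * sqrt (H q) \<le> sqrt (H p) * (C * norm (p - q))"
      using hp Hnn[of q] by simp
    then show ?thesis by (rule sqrt_diff_bound[rotated 3]) (use hp C0 Hnn in auto)
  qed
  have "\<bar>sqrt (H p) - sqrt (H q)\<bar> \<le> C * norm (p - q)" if "p \<in> cball 0 \<rho>" "q \<in> cball 0 \<rho>" for p q
    using one[OF that] one[OF that(2,1)] by (simp add: norm_minus_commute abs_le_iff)
  then show ?thesis using C0 by blast
qed

lemma lip_main:
  assumes smH: "smooth_on UNIV H" and h1: "H1' H" and h2: "H2 H"
    and sm: "smooth_on U u" and U: "open U"
  shows "locally_lipschitz_on U (\<lambda>x. sqrt (H (grad u x)))"
  unfolding locally_lipschitz_on_def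
proof
  fix x assume x: "x \<in> U"
  obtain r where r: "r > 0" "cball x r \<subseteq> U" using U x open_contains_cball by blast
  obtain L where L: "L \<ge> 0" "\<forall>y\<in>cball x r. \<forall>z\<in>cball x r. norm (grad u y - grad u z) \<le> L * norm (y - z)"
    using grad_lip[OF sm U r(2) compact_cball convex_cball] by blast
  have "compact (grad u ` cball x r)"
    by (rule compact_continuous_image[OF continuous_on_subset[OF grad_cont[OF sm] r(2)] compact_cball])
  then have "bounded (grad u ` cball x r)" by (rule compact_imp_bounded)
  from this[unfolded bounded_iff] obtain \<rho> where \<rho>: "\<forall>v\<in>grad u ` cball x r. norm v \<le> \<rho>" ..
  obtain C where C: "C \<ge> 0" "\<forall>p\<in>cball 0 \<rho>. \<forall>q\<in>cball 0 \<rho>. \<bar>sqrt (H p) - sqrt (H q)\<bar> \<le> C * norm (p - q)"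
    using sqrtH_lip[OF smH h1 h2] by blast
  have "(C * L)-lipschitz_on (cball x r) (\<lambda>x. sqrt (H (grad u x)))"
  proof (rule lipschitz_onI)
    fix y z assume y: "y \<in> cball x r" and z: "z \<in> cball x r"
    have gy: "grad u y \<in> cball 0 \<rho>" and gz: "grad u z \<in> cball 0 \<rho>" using \<rho> y z by (auto simp: dist_norm)
    have "\<bar>sqrt (H (grad u y)) - sqrt (H (grad u z))\<bar> \<le> C * norm (grad u y - grad u z)"
      using C gy gz by blast
    also have "\<dots> \<le> C * (L * norm (y - z))" using L y z C by (intro mult_left_mono) auto
    finally show "dist (sqrt (H (grad u y))) (sqrt (H (grad u z))) \<le> C * L * dist y z"
      by (simp add: dist_norm dist_real_def mult.assoc)
  next
    show "0 \<le> C * L" using C L by simp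
  qed
  then show "\<exists>r>0. \<exists>C. cball x r \<subseteq> U \<and> C-lipschitz_on (cball x r) (\<lambda>x. sqrt (H (grad u x)))"
    using r by blast
qed


theorem theorem2p3:
  fixes H u :: "real^2 \<Rightarrow> real" and U :: "(real^2) set" and \<epsilon> :: real
  assumes "smooth_on UNIV H" and "H1' H" and "H2 H"
    and "open U" and "connected U" and "U \<noteq> {}"
    and "0 < \<epsilon>" and "\<epsilon> \<le> 1"
    and "smooth_on U u"
    and "\<forall>x\<in>U. AH H u x + \<epsilon> * divDH H u x = 0"
  shows "locally_lipschitz_on U (\<lambda>x. sqrt (H (grad u x)))
    \<and> (\<forall>x\<in>U. (\<lambda>y. sqrt (H (grad u y))) differentiable (at x) \<longrightarrow>
        (- det (hess u x)) * det (hess H (grad u x)) =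
          4 * tauH H (grad u x) *
            ((hess H (grad u x) *v grad (\<lambda>y. sqrt (H (grad u y))) x)
               \<bullet> grad (\<lambda>y. sqrt (H (grad u y))) x)
          + tauH H (grad u x) *
            (if grad u x = 0 then 0
             else \<epsilon> * (divDH H u x)\<^sup>2 / H (grad u x)))
    \<and> (\<forall>x\<in>U. - det (hess u x) \<ge> 0)"
proof (intro conjI ballI impI)
  show "locally_lipschitz_on U (\<lambda>x. sqrt (H (grad u x)))"
    by (rule lip_main[OF assms(1-3) assms(9) assms(4)])
next
  fix x assume x: "x \<in> U" and dif: "(\<lambda>y. sqrt (H (grad u y))) differentiable (at x)"
  have pde: "AH H u x + \<epsilon> * divDH H u x = 0" using assms(10) x by blast
  show "(- det (hess u x)) * det (hess H (grad u x)) =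
          4 * tauH H (grad u x) *
            ((hess H (grad u x) *v grad (\<lambda>y. sqrt (H (grad u y))) x)
               \<bullet> grad (\<lambda>y. sqrt (H (grad u y))) x)
          + tauH H (grad u x) *
            (if grad u x = 0 then 0
             else \<epsilon> * (divDH H u x)\<^sup>2 / H (grad u x))"
  proof (cases "grad u x = 0")
    case True
    have z1: "grad (\<lambda>y. sqrt (H (grad u y))) x = 0"
      by (rule zero_case(1)[OF assms(1-3) assms(9) assms(4) x True dif])
    have z2: "det (hess u x) = 0"
      by (rule zero_case(2)[OF assms(1-3) assms(9) assms(4) x True dif])
    show ?thesis unfolding z1 z2 using True by simp
  next
    case False
    show ?thesis by (rule ident_nz[OF assms(1-3) assms(9) assms(4) x pde False])
  qed
next
  fix x assume x: "x \<in> U"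
  have pde: "AH H u x + \<epsilon> * divDH H u x = 0" using assms(10) x by blast
  show "- det (hess u x) \<ge> 0" by (rule det_nonneg[OF assms(1-3) assms(9) assms(4) x assms(7) pde])
qed

end
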